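(* Consider the instrumental-variables model described in the context, with first-stage coefficient $\pi_1 \neq 0$, and suppose that either Assumption A or Assumption B holds. Let $(\lambda_n)$ be a sequence of penalty parameters with $\lambda_n = o(n)$, i.e. $\lambda_n/n \to 0$. Then the ridge IV estimator \[ \hat\beta_{\text{ridge}} = \frac{\sum_{i=1}^n (Y_i-\bar Y)(Z_i-\bar Z)}{\sum_{i=1}^n (D_i-\bar D)(Z_i-\bar Z) + \lambda_n} \] is consistent: $\hat\beta_{\text{ridge}} \xrightarrow{p} \beta_1$ as $n\to\infty$.
   Context: Data model: for each sample size $n$, observations $(Y_i,D_i,Z_i)$, $i=1,\dots,n$, satisfy $Y_i=\beta_0+\beta_1 D_i+\epsilon_i$ and $D_i=\pi_0+\pi_1 Z_i+\eta_i$, where the error pairs $(\epsilon_i,\eta_i)$ are i.i.d. across $i$ with mean zero, $\mathrm{Var}(\epsilon_i)=\sigma_\epsilon^2<\infty$, $\mathrm{Var}(\eta_i)=\sigma_\eta^2<\infty$ and $\mathrm{Cov}(\epsilon_i,\eta_i)=\sigma_{\epsilon\eta}$ (the errors may be correlated, i.e. $D_i$ is endogenous), and the instruments $Z_i$ are independent of the errors. Bars denote sample means, e.g. $\bar Y=\frac1n\sum_i Y_i$. The penalty $\lambda_n$ is a deterministic sequence of nonnegative reals. Assumption A (instruments as constants): the analysis is conditional on the instruments, so $Z_1,Z_2,\dots$ is a deterministic real sequence, with $\frac1n\sum_{i=1}^n Z_i^2\to 1$ and $\frac1n\sum_{i=1}^n Z_i \to 0$. Assumption B (stochastic instruments): the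 $Z_i$ are i.i.d. random variables, independent of the errors, with $\mathrm{Var}(Z_i)=1$ and finite fourth moment $m_4=E[Z_i^4]$. *)

theory Defs
  imports "HOL-Probability.Probability"
begin

definition sample_mean :: "(nat \<Rightarrow> real) \<Rightarrow> nat \<Rightarrow> real" where
  "sample_mean X n = (\<Sum>i<n. X i) / real n"

definition ridge_iv :: "(nat \<Rightarrow> real) \<Rightarrow> (nat \<Rightarrow> real) \<Rightarrow> (nat \<Rightarrow> real) \<Rightarrow> real \<Rightarrow> nat \<Rightarrow> real" where
  "ridge_iv Y D Z lam n =
     (\<Sum>i<n. (Y i - sample_mean Y n) * (Z i - sample_mean Z n)) /
     ((\<Sum>i<n. (D i - sample_mean D n) * (Z i - sample_mean Z n)) + lam)"

definition conv_in_prob :: "'a measure \<Rightarrow> (nat \<Rightarrow> 'a \<Rightarrow> real) \<Rightarrow> real \<Rightarrow> bool" where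
  "conv_in_prob M X c \<longleftrightarrow>
     (\<forall>e>0. (\<lambda>n. measure M {\<omega> \<in> space M. \<bar>X n \<omega> - c\<bar> > e}) \<longlonglongrightarrow> 0)"

end

theory Submission
  imports Defs
begin
lemma conv_det:
  assumes "a \<longlonglongrightarrow> c"
  shows "conv_in_prob M (\<lambda>n \<omega>. a n) c"
  unfolding conv_in_prob_def
proof (intro allI impI)
  fix e :: real assume e: "e > 0"
  have "eventually (\<lambda>n. dist (a n) c < e) sequentially"
    using assms e by (simp add: tendsto_iff)
  then have "eventually (\<lambda>n. measure M {\<omega> \<in> space M. \<bar>a n - c\<bar> > e} = 0) sequentially"
    by eventually_elim (simp add: dist_real_def)
  then show "(\<lambda>n. measure M {\<omega> \<in> space M. \<bar>a n - c\<bar> > e}) \<longlonglongrightarrow> 0"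
    by (rule tendsto_eventually)
qed

context prob_space begin

lemma conv3:
  assumes m1: "\<And>n. X1 n \<in> borel_measurable M"
    and m2: "\<And>n. X2 n \<in> borel_measurable M"
    and m3: "\<And>n. X3 n \<in> borel_measurable M"
    and c1: "conv_in_prob M X1 a1" and c2: "conv_in_prob M X2 a2" and c3: "conv_in_prob M X3 a3"
    and key: "\<And>e. e > 0 \<Longrightarrow> \<exists>d>0. eventually (\<lambda>n. \<forall>\<omega>\<in>space M.
         \<bar>X1 n \<omega> - a1\<bar> < d \<longrightarrow> \<bar>X2 n \<omega> - a2\<bar> < d \<longrightarrow> \<bar>X3 n \<omega> - a3\<bar> < d \<longrightarrow> \<bar>W n \<omega> - c\<bar> \<le> e) sequentially"
  shows "conv_in_prob M W c"
  unfolding conv_in_prob_def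
proof (intro allI impI)
  fix e :: real assume e: "e > 0"
  obtain d where d: "d > 0" and ev: "eventually (\<lambda>n. \<forall>\<omega>\<in>space M.
         \<bar>X1 n \<omega> - a1\<bar> < d \<longrightarrow> \<bar>X2 n \<omega> - a2\<bar> < d \<longrightarrow> \<bar>X3 n \<omega> - a3\<bar> < d \<longrightarrow> \<bar>W n \<omega> - c\<bar> \<le> e) sequentially"
    using key[OF e] by blast
  define A1 where "A1 n = {\<omega> \<in> space M. \<bar>X1 n \<omega> - a1\<bar> > d/2}" for n
  define A2 where "A2 n = {\<omega> \<in> space M. \<bar>X2 n \<omega> - a2\<bar> > d/2}" for n
  define A3 where "A3 n = {\<omega> \<in> space M. \<bar>X3 n \<omega> - a3\<bar> > d/2}" for n
  have s1: "A1 n \<in> events" for n unfolding A1_def using m1[of n] by measurable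
  have s2: "A2 n \<in> events" for n unfolding A2_def using m2[of n] by measurable
  have s3: "A3 n \<in> events" for n unfolding A3_def using m3[of n] by measurable
  have t1: "(\<lambda>n. prob (A1 n)) \<longlonglongrightarrow> 0" using c1[unfolded conv_in_prob_def, rule_format, of "d/2"] d unfolding A1_def by simp
  have t2: "(\<lambda>n. prob (A2 n)) \<longlonglongrightarrow> 0" using c2[unfolded conv_in_prob_def, rule_format, of "d/2"] d unfolding A2_def by simp
  have t3: "(\<lambda>n. prob (A3 n)) \<longlonglongrightarrow> 0" using c3[unfolded conv_in_prob_def, rule_format, of "d/2"] d unfolding A3_def by simp
  have t: "(\<lambda>n. prob (A1 n) + prob (A2 n) + prob (A3 n)) \<longlonglongrightarrow> 0"
    using tendsto_add[OF tendsto_add[OF t1 t2] t3] by simp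
  have le: "eventually (\<lambda>n. prob {\<omega> \<in> space M. \<bar>W n \<omega> - c\<bar> > e} \<le> prob (A1 n) + prob (A2 n) + prob (A3 n)) sequentially"
    using ev
  proof eventually_elim
    case (elim n)
    have sub: "{\<omega> \<in> space M. \<bar>W n \<omega> - c\<bar> > e} \<subseteq> A1 n \<union> A2 n \<union> A3 n"
    proof
      fix \<omega> assume w: "\<omega> \<in> {\<omega> \<in> space M. \<bar>W n \<omega> - c\<bar> > e}"
      show "\<omega> \<in> A1 n \<union> A2 n \<union> A3 n"
      proof (rule ccontr)
        assume "\<omega> \<notin> A1 n \<union> A2 n \<union> A3 n"
        then have "\<bar>X1 n \<omega> - a1\<bar> < d" "\<bar>X2 n \<omega> - a2\<bar> < d" "\<bar>X3 n \<omega> - a3\<bar> < d"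
          using w d unfolding A1_def A2_def A3_def by auto
        then show False using elim w by force
      qed
    qed
    have "prob {\<omega> \<in> space M. \<bar>W n \<omega> - c\<bar> > e} \<le> prob (A1 n \<union> A2 n \<union> A3 n)"
      by (rule finite_measure_mono[OF sub]) (use s1 s2 s3 in auto)
    also have "\<dots> \<le> prob (A1 n \<union> A2 n) + prob (A3 n)"
      by (rule measure_Un_le) (use s1 s2 s3 in auto)
    also have "\<dots> \<le> prob (A1 n) + prob (A2 n) + prob (A3 n)"
      using measure_Un_le[OF s1 s2, of n n] by simp
    finally show ?case .
  qed
  show "(\<lambda>n. prob {\<omega> \<in> space M. \<bar>W n \<omega> - c\<bar> > e}) \<longlonglongrightarrow> 0"
    by (rule tendsto_sandwich[OF _ le tendsto_const t]) simp
qed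

end

context prob_space begin

lemma int_prod_sq:
  fixes X Y :: "'a \<Rightarrow> real"
  assumes "X \<in> borel_measurable M" "Y \<in> borel_measurable M"
    "integrable M (\<lambda>\<omega>. (X \<omega>)\<^sup>2)" "integrable M (\<lambda>\<omega>. (Y \<omega>)\<^sup>2)"
  shows "integrable M (\<lambda>\<omega>. X \<omega> * Y \<omega>)"
proof (rule Bochner_Integration.integrable_bound[of _ "\<lambda>\<omega>. (X \<omega>)\<^sup>2 + (Y \<omega>)\<^sup>2"])
  show "integrable M (\<lambda>\<omega>. (X \<omega>)\<^sup>2 + (Y \<omega>)\<^sup>2)" using assms by auto
  show "(\<lambda>\<omega>. X \<omega> * Y \<omega>) \<in> borel_measurable M" using assms by measurable
  have "\<bar>x * y\<bar> \<le> x\<^sup>2 + y\<^sup>2" for x y :: real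
  proof -
    have "0 \<le> (\<bar>x\<bar> - \<bar>y\<bar>)\<^sup>2" by simp
    then have "2 * \<bar>x\<bar> * \<bar>y\<bar> \<le> \<bar>x\<bar>\<^sup>2 + \<bar>y\<bar>\<^sup>2" by (simp add: power2_diff)
    moreover have "0 \<le> \<bar>x\<bar> * \<bar>y\<bar>" by simp
    ultimately show ?thesis unfolding abs_mult power2_abs by linarith
  qed
  then show "AE \<omega> in M. norm (X \<omega> * Y \<omega>) \<le> norm ((X \<omega>)\<^sup>2 + (Y \<omega>)\<^sup>2)" by simp
qed

lemma wlln_L2:
  fixes X :: "nat \<Rightarrow> 'a \<Rightarrow> real"
  assumes m: "\<And>i. X i \<in> borel_measurable M"
    and sq: "\<And>i. integrable M (\<lambda>\<omega>. (X i \<omega>)\<^sup>2)"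
    and orth: "\<And>i j. i \<noteq> j \<Longrightarrow> expectation (\<lambda>\<omega>. X i \<omega> * X j \<omega>) = 0"
    and v: "(\<lambda>n. (\<Sum>i<n. expectation (\<lambda>\<omega>. (X i \<omega>)\<^sup>2)) / (real n)\<^sup>2) \<longlonglongrightarrow> 0"
  shows "conv_in_prob M (\<lambda>n \<omega>. (\<Sum>i<n. X i \<omega>) / real n) 0"
  unfolding conv_in_prob_def
proof (intro allI impI)
  fix e :: real assume e: "e > 0"
  have pint: "integrable M (\<lambda>\<omega>. X i \<omega> * X j \<omega>)" for i j
    by (rule int_prod_sq[OF m m sq sq])
  have ES: "expectation (\<lambda>\<omega>. (\<Sum>i<n. X i \<omega>)\<^sup>2) = (\<Sum>i<n. expectation (\<lambda>\<omega>. (X i \<omega>)\<^sup>2))" for n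
  proof -
    have "(\<lambda>\<omega>. (\<Sum>i<n. X i \<omega>)\<^sup>2) = (\<lambda>\<omega>. \<Sum>i<n. \<Sum>j<n. X i \<omega> * X j \<omega>)"
      by (simp add: power2_eq_square sum_product)
    then have "expectation (\<lambda>\<omega>. (\<Sum>i<n. X i \<omega>)\<^sup>2) = (\<Sum>i<n. \<Sum>j<n. expectation (\<lambda>\<omega>. X i \<omega> * X j \<omega>))"
      using pint by (simp add: Bochner_Integration.integral_sum integrable_sum)
    also have "\<dots> = (\<Sum>i<n. \<Sum>j<n. if j = i then expectation (\<lambda>\<omega>. (X i \<omega>)\<^sup>2) else 0)"
      by (intro sum.cong refl) (auto simp: orth power2_eq_square)
    also have "\<dots> = (\<Sum>i<n. expectation (\<lambda>\<omega>. (X i \<omega>)\<^sup>2))"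
      by (simp add: sum.delta)
    finally show ?thesis .
  qed
  have bound: "prob {\<omega> \<in> space M. \<bar>(\<Sum>i<n. X i \<omega>) / real n - 0\<bar> > e}
      \<le> (\<Sum>i<n. expectation (\<lambda>\<omega>. (X i \<omega>)\<^sup>2)) / (real n)\<^sup>2 / e\<^sup>2" if n: "n > 0" for n
  proof -
    let ?u = "\<lambda>\<omega>. ((\<Sum>i<n. X i \<omega>) / real n)\<^sup>2"
    have uint: "integrable M ?u"
    proof -
      have "integrable M (\<lambda>\<omega>. (\<Sum>i<n. \<Sum>j<n. X i \<omega> * X j \<omega>) / (real n)\<^sup>2)"
        using pint by (intro integrable_divide integrable_sum) auto
      moreover have "(\<lambda>\<omega>. (\<Sum>i<n. \<Sum>j<n. X i \<omega> * X j \<omega>) / (real n)\<^sup>2) = ?u"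
        by (simp add: power2_eq_square sum_product power_divide)
      ultimately show ?thesis by simp
    qed
    have "{\<omega> \<in> space M. \<bar>(\<Sum>i<n. X i \<omega>) / real n - 0\<bar> > e} \<subseteq> {\<omega> \<in> space M. ?u \<omega> \<ge> e\<^sup>2}"
    proof safe
      fix \<omega> assume "\<bar>(\<Sum>i<n. X i \<omega>) / real n - 0\<bar> > e"
      then have "e\<^sup>2 \<le> (\<bar>(\<Sum>i<n. X i \<omega>) / real n\<bar>)\<^sup>2"
        using e by (intro power_mono) auto
      then show "e\<^sup>2 \<le> ?u \<omega>" by (simp only: power2_abs)
    qed
    then have "prob {\<omega> \<in> space M. \<bar>(\<Sum>i<n. X i \<omega>) / real n - 0\<bar> > e} \<le> prob {\<omega> \<in> space M. ?u \<omega> \<ge> e\<^sup>2}"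
      by (rule finite_measure_mono) (use m in measurable)
    also have "\<dots> \<le> expectation ?u / e\<^sup>2"
      by (rule integral_Markov_inequality_measure[OF uint]) (use e in auto)
    also have "expectation ?u = expectation (\<lambda>\<omega>. (\<Sum>i<n. X i \<omega>)\<^sup>2) / (real n)\<^sup>2"
      by (simp add: power_divide)
    finally show ?thesis using ES by simp
  qed
  have lim: "(\<lambda>n. (\<Sum>i<n. expectation (\<lambda>\<omega>. (X i \<omega>)\<^sup>2)) / (real n)\<^sup>2 / e\<^sup>2) \<longlonglongrightarrow> 0"
    using tendsto_divide[OF v tendsto_const[of "e\<^sup>2"]] e by simp
  show "(\<lambda>n. prob {\<omega> \<in> space M. \<bar>(\<Sum>i<n. X i \<omega>) / real n - 0\<bar> > e}) \<longlonglongrightarrow> 0"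
  proof (rule tendsto_sandwich[OF _ _ tendsto_const lim])
    show "eventually (\<lambda>n. 0 \<le> prob {\<omega> \<in> space M. \<bar>(\<Sum>i<n. X i \<omega>) / real n - 0\<bar> > e}) sequentially"
      by simp
    show "eventually (\<lambda>n. prob {\<omega> \<in> space M. \<bar>(\<Sum>i<n. X i \<omega>) / real n - 0\<bar> > e}
       \<le> (\<Sum>i<n. expectation (\<lambda>\<omega>. (X i \<omega>)\<^sup>2)) / (real n)\<^sup>2 / e\<^sup>2) sequentially"
      using eventually_gt_at_top[of 0] by eventually_elim (rule bound)
  qed
qed

end

lemma conv_ev_cong:
  assumes "conv_in_prob M X c"
    and ev: "eventually (\<lambda>n. \<forall>\<omega>\<in>space M. X n \<omega> = X' n \<omega>) sequentially"
  shows "conv_in_prob M X' c"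
  unfolding conv_in_prob_def
proof (intro allI impI)
  fix e :: real assume e: "e > 0"
  have "eventually (\<lambda>n. measure M {\<omega> \<in> space M. \<bar>X n \<omega> - c\<bar> > e} = measure M {\<omega> \<in> space M. \<bar>X' n \<omega> - c\<bar> > e}) sequentially"
    using ev by eventually_elim (intro arg_cong[where f="measure M"] Collect_cong, auto)
  moreover have "(\<lambda>n. measure M {\<omega> \<in> space M. \<bar>X n \<omega> - c\<bar> > e}) \<longlonglongrightarrow> 0"
    using assms e unfolding conv_in_prob_def by auto
  ultimately show "(\<lambda>n. measure M {\<omega> \<in> space M. \<bar>X' n \<omega> - c\<bar> > e}) \<longlonglongrightarrow> 0"
    by (rule Lim_transform_eventually[rotated])
qed

lemma ratio_bound:
  fixes p1 b1 e :: real
  assumes p1: "p1 \<noteq> 0" and e: "e > 0"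
  shows "\<exists>d>0. \<forall>Q E H L. \<bar>Q - 1\<bar> < d \<longrightarrow> \<bar>E\<bar> < d \<longrightarrow> \<bar>H\<bar> < d \<longrightarrow> 0 \<le> L \<longrightarrow> L < d \<longrightarrow>
     \<bar>(b1 * (p1 * Q + H) + E) / ((p1 * Q + H) + L) - b1\<bar> \<le> e"
proof -
  define a where "a = \<bar>p1\<bar>"
  have a: "a > 0" using p1 by (simp add: a_def)
  define d where "d = min (a / (2 * (a + 2))) (e * a / (2 * (1 + \<bar>b1\<bar>)))"
  have d: "d > 0" using a e by (simp add: d_def)
  have d1: "d * (a + 2) \<le> a / 2"
  proof -
    have "d \<le> a / (2 * (a + 2))" by (simp add: d_def)
    then show ?thesis using a by (simp add: field_simps)
  qed
  have d2: "d * (1 + \<bar>b1\<bar>) \<le> e * a / 2"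
  proof -
    have "d \<le> e * a / (2 * (1 + \<bar>b1\<bar>))" by (simp add: d_def)
    then show ?thesis by (simp add: field_simps)
  qed
  show ?thesis
  proof (intro exI[of _ d] conjI d allI impI)
    fix Q E H L :: real
    assume q: "\<bar>Q - 1\<bar> < d" and eE: "\<bar>E\<bar> < d" and h: "\<bar>H\<bar> < d" and L0: "0 \<le> L" and L: "L < d"
    define den where "den = p1 * Q + H + L"
    have "\<bar>p1 * Q\<bar> \<ge> a * (1 - d)"
    proof -
      have "Q \<ge> 1 - d" using q by linarith
      moreover have "1 - d \<ge> 0"
      proof -
        have "d * a \<le> (1/2) * a" using d1 d by (simp add: algebra_simps)
        then have "d \<le> 1/2" using a by (rule mult_right_le_imp_le)
        then show ?thesis by simp
      qed
      ultimately have "\<bar>Q\<bar> \<ge> 1 - d" by linarith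
      then show ?thesis unfolding a_def abs_mult by (intro mult_left_mono) auto
    qed
    have den: "\<bar>den\<bar> \<ge> a / 2"
    proof -
      have e1: "a * (1 - d) = a - a * d" by (simp add: algebra_simps)
      have e2: "d * (a + 2) = a * d + 2 * d" by (simp add: algebra_simps)
      have "\<bar>den\<bar> \<ge> \<bar>p1 * Q\<bar> - \<bar>H\<bar> - L" unfolding den_def using L0 by linarith
      moreover have "a * (1 - d) - 2 * d \<ge> a / 2" unfolding e1 using d1 unfolding e2 by linarith
      ultimately show ?thesis using h L \<open>\<bar>p1 * Q\<bar> \<ge> a * (1 - d)\<close> by linarith
    qed
    have num: "\<bar>E - b1 * L\<bar> \<le> d * (1 + \<bar>b1\<bar>)"
    proof -
      have "\<bar>b1 * L\<bar> \<le> \<bar>b1\<bar> * d" unfolding abs_mult using L L0 by (intro mult_left_mono) auto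
      then show ?thesis using eE by (simp add: algebra_simps)
    qed
    have dpos: "den \<noteq> 0" using den a by auto
    have "(b1 * (p1 * Q + H) + E) / ((p1 * Q + H) + L) - b1 = (E - b1 * L) / den"
      using dpos unfolding den_def by (simp add: field_simps)
    also have "\<bar>\<dots>\<bar> = \<bar>E - b1 * L\<bar> / \<bar>den\<bar>" by simp
    also have "\<dots> \<le> (e * a / 2) / (a / 2)"
      using num d2 den a by (intro frac_le) auto
    also have "\<dots> = e" using a by simp
    finally show "\<bar>(b1 * (p1 * Q + H) + E) / ((p1 * Q + H) + L) - b1\<bar> \<le> e" .
  qed
qed

context prob_space begin

lemma conv_sub_mult:
  assumes mA: "\<And>n. A n \<in> borel_measurable M" and mB: "\<And>n. B n \<in> borel_measurable M"
    and mC: "\<And>n. C n \<in> borel_measurable M"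
    and cA: "conv_in_prob M A a" and cB: "conv_in_prob M B b" and cC: "conv_in_prob M C c"
  shows "conv_in_prob M (\<lambda>n \<omega>. A n \<omega> - B n \<omega> * C n \<omega>) (a - b * c)"
proof (rule conv3[OF mA mB mC cA cB cC])
  fix e :: real assume e: "e > 0"
  define K where "K = 2 + \<bar>b\<bar> + \<bar>c\<bar>"
  have K: "K > 0" unfolding K_def by simp
  define d where "d = min 1 (e / K)"
  have d: "d > 0" "d \<le> 1" "d * K \<le> e" using e K by (auto simp: d_def min_def field_simps)
  have "\<forall>\<omega>\<in>space M. \<bar>A n \<omega> - a\<bar> < d \<longrightarrow> \<bar>B n \<omega> - b\<bar> < d \<longrightarrow> \<bar>C n \<omega> - c\<bar> < d \<longrightarrow>
        \<bar>A n \<omega> - B n \<omega> * C n \<omega> - (a - b * c)\<bar> \<le> e" for n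
  proof (intro ballI impI)
    fix \<omega> assume h1: "\<bar>A n \<omega> - a\<bar> < d" and h2: "\<bar>B n \<omega> - b\<bar> < d" and h3: "\<bar>C n \<omega> - c\<bar> < d"
    define x where "x = B n \<omega> - b"
    define y where "y = C n \<omega> - c"
    have eq: "A n \<omega> - B n \<omega> * C n \<omega> - (a - b * c) = (A n \<omega> - a) - (x * C n \<omega> + b * y)"
      unfolding x_def y_def by (simp add: algebra_simps)
    have Cb: "\<bar>C n \<omega>\<bar> \<le> \<bar>c\<bar> + 1" using h3 d by linarith
    have "\<bar>x * C n \<omega>\<bar> \<le> d * (\<bar>c\<bar> + 1)" unfolding abs_mult
      using h2 Cb x_def by (intro mult_mono) auto
    moreover have "\<bar>b * y\<bar> \<le> \<bar>b\<bar> * d" unfolding abs_mult using h3 y_def by (intro mult_left_mono) auto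
    ultimately have "\<bar>A n \<omega> - B n \<omega> * C n \<omega> - (a - b * c)\<bar> \<le> d + d * (\<bar>c\<bar> + 1) + \<bar>b\<bar> * d"
      unfolding eq using h1 by linarith
    also have "\<dots> = d * K" unfolding K_def by (simp add: algebra_simps)
    finally show "\<bar>A n \<omega> - B n \<omega> * C n \<omega> - (a - b * c)\<bar> \<le> e" using d by linarith
  qed
  then show "\<exists>d>0. eventually (\<lambda>n. \<forall>\<omega>\<in>space M. \<bar>A n \<omega> - a\<bar> < d \<longrightarrow> \<bar>B n \<omega> - b\<bar> < d \<longrightarrow> \<bar>C n \<omega> - c\<bar> < d \<longrightarrow>
        \<bar>A n \<omega> - B n \<omega> * C n \<omega> - (a - b * c)\<bar> \<le> e) sequentially"
    using d by (intro exI[of _ d]) auto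
qed

lemma indep_pair:
  assumes "indep_vars (\<lambda>_. N) X I" "i \<in> I" "j \<in> I" "i \<noteq> j"
  shows "indep_var N (X i) N (X j)"
proof -
  have "indep_var N ((\<lambda>f. f i) \<circ> (\<lambda>\<omega>. restrict (\<lambda>i. X i \<omega>) {i}))
                  N ((\<lambda>f. f j) \<circ> (\<lambda>\<omega>. restrict (\<lambda>i. X i \<omega>) {j}))"
    using assms by (intro indep_var_compose[OF indep_var_restrict[OF assms(1)]]) auto
  moreover have "((\<lambda>f. f i) \<circ> (\<lambda>\<omega>. restrict (\<lambda>i. X i \<omega>) {i})) = X i" by auto
  moreover have "((\<lambda>f. f j) \<circ> (\<lambda>\<omega>. restrict (\<lambda>i. X i \<omega>) {j})) = X j" by auto
  ultimately show ?thesis by simp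
qed

lemma ident_transfer:
  assumes d: "distr M N F = distr M N G" and F: "F \<in> measurable M N" and G: "G \<in> measurable M N"
    and g: "g \<in> borel_measurable N"
  shows "integrable M (\<lambda>\<omega>. g (F \<omega>)) \<longleftrightarrow> integrable M (\<lambda>\<omega>. (g (G \<omega>) :: real))"
    and "expectation (\<lambda>\<omega>. g (F \<omega>)) = expectation (\<lambda>\<omega>. g (G \<omega>))"
proof -
  show "integrable M (\<lambda>\<omega>. g (F \<omega>)) \<longleftrightarrow> integrable M (\<lambda>\<omega>. (g (G \<omega>) :: real))"
    using integrable_distr_eq[OF F g] integrable_distr_eq[OF G g] d by simp
  show "expectation (\<lambda>\<omega>. g (F \<omega>)) = expectation (\<lambda>\<omega>. g (G \<omega>))"
    using integral_distr[OF F g] integral_distr[OF G g] d by simp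
qed

end

lemma const_sum_lim: "(\<lambda>n. (\<Sum>i<n. c) / (real n)\<^sup>2 :: real) \<longlonglongrightarrow> 0"
proof -
  have "(\<lambda>n. c / real n) \<longlonglongrightarrow> 0" by (rule lim_const_over_n)
  moreover have "eventually (\<lambda>n. c / real n = (\<Sum>i<n. c) / (real n)\<^sup>2) sequentially"
    using eventually_gt_at_top[of 0] by eventually_elim (simp add: power2_eq_square)
  ultimately show ?thesis by (rule Lim_transform_eventually)
qed

lemma sum_centered:
  fixes a z :: "nat \<Rightarrow> real"
  shows "(\<Sum>i<n. (a i - c) * (z i - sample_mean z n)) = (\<Sum>i<n. a i * (z i - sample_mean z n))"
proof (cases "n = 0")
  case False
  have "(\<Sum>i<n. (z i - sample_mean z n)) = 0"
    using False by (simp add: sum_subtractf sample_mean_def)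
  then have "(\<Sum>i<n. c * (z i - sample_mean z n)) = 0" by (simp add: sum_distrib_left[symmetric])
  then show ?thesis by (simp add: left_diff_distrib sum_subtractf)
qed simp

lemma ridge_identity:
  fixes y d z e h :: "nat \<Rightarrow> real"
  assumes n: "n > 0" and Y: "\<And>i. y i = b0 + b1 * d i + e i" and D: "\<And>i. d i = p0 + p1 * z i + h i"
  defines "w \<equiv> \<lambda>i. z i - sample_mean z n"
  shows "ridge_iv y d z lam n =
     (b1 * (p1 * ((\<Sum>i<n. z i * w i) / real n) + (\<Sum>i<n. h i * w i) / real n) + (\<Sum>i<n. e i * w i) / real n) /
     ((p1 * ((\<Sum>i<n. z i * w i) / real n) + (\<Sum>i<n. h i * w i) / real n) + lam / real n)"
proof -
  have w0: "(\<Sum>i<n. w i) = 0"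
    using n by (simp add: w_def sum_subtractf sample_mean_def)
  have c0: "(\<Sum>i<n. c * w i) = 0" for c by (simp add: sum_distrib_left[symmetric] w0)
  have "(\<Sum>i<n. y i * w i) = (\<Sum>i<n. b0 * w i + b1 * (d i * w i) + e i * w i)"
    by (intro sum.cong refl) (simp add: Y algebra_simps)
  also have "\<dots> = b1 * (\<Sum>i<n. d i * w i) + (\<Sum>i<n. e i * w i)"
    by (simp add: sum.distrib sum_distrib_left[symmetric] c0 w0)
  finally have ny: "(\<Sum>i<n. y i * w i) = b1 * (\<Sum>i<n. d i * w i) + (\<Sum>i<n. e i * w i)" .
  have "(\<Sum>i<n. d i * w i) = (\<Sum>i<n. p0 * w i + p1 * (z i * w i) + h i * w i)"
    by (intro sum.cong refl) (simp add: D algebra_simps)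
  also have "\<dots> = p1 * (\<Sum>i<n. z i * w i) + (\<Sum>i<n. h i * w i)"
    by (simp add: sum.distrib sum_distrib_left[symmetric] c0 w0)
  finally have nd: "(\<Sum>i<n. d i * w i) = p1 * (\<Sum>i<n. z i * w i) + (\<Sum>i<n. h i * w i)" .
  have r: "ridge_iv y d z lam n = (b1 * (p1 * (\<Sum>i<n. z i * w i) + (\<Sum>i<n. h i * w i)) + (\<Sum>i<n. e i * w i))
      / ((p1 * (\<Sum>i<n. z i * w i) + (\<Sum>i<n. h i * w i)) + lam)"
    unfolding ridge_iv_def sum_centered using ny nd by (simp add: w_def)
  have gen: "X / Yv = (X / real n) / (Yv / real n)" for X Yv :: real
    using n by (cases "Yv = 0") (simp_all add: field_simps)
  have nn: "b1 * (p1 * (A / real n) + B / real n) + C / real n = (b1 * (p1 * A + B) + C) / real n"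
    for A B C :: real using n by (simp add: field_simps)
  have dd: "(p1 * (A / real n) + B / real n) + lam / real n = ((p1 * A + B) + lam) / real n"
    for A B :: real using n by (simp add: field_simps)
  show ?thesis unfolding r nn dd by (rule gen)
qed

context prob_space begin

lemma wlln_const:
  fixes X :: "nat \<Rightarrow> 'a \<Rightarrow> real"
  assumes m: "\<And>i. X i \<in> borel_measurable M"
    and sq: "\<And>i. integrable M (\<lambda>\<omega>. (X i \<omega>)\<^sup>2)"
    and orth: "\<And>i j. i \<noteq> j \<Longrightarrow> expectation (\<lambda>\<omega>. X i \<omega> * X j \<omega>) = 0"
    and c: "\<And>i. expectation (\<lambda>\<omega>. (X i \<omega>)\<^sup>2) = c"
  shows "conv_in_prob M (\<lambda>n \<omega>. (\<Sum>i<n. X i \<omega>) / real n) 0"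
proof (rule wlln_L2[OF m sq])
  show "\<And>i j. i \<noteq> j \<Longrightarrow> expectation (\<lambda>\<omega>. X i \<omega> * X j \<omega>) = 0" by (rule orth)
  show "(\<lambda>n. (\<Sum>i<n. expectation (\<lambda>\<omega>. (X i \<omega>)\<^sup>2)) / (real n)\<^sup>2) \<longlonglongrightarrow> 0"
    unfolding c by (rule const_sum_lim)
qed

lemma uncorr:
  fixes X :: "nat \<Rightarrow> 'a \<Rightarrow> real"
  assumes "indep_vars (\<lambda>_. borel) X UNIV" "i \<noteq> j"
    "\<And>i. integrable M (X i)" "\<And>i. expectation (X i) = 0"
  shows "expectation (\<lambda>\<omega>. X i \<omega> * X j \<omega>) = 0"
  using indep_var_lebesgue_integral[OF indep_pair[OF assms(1) _ _ assms(2)]] assms(3,4) by simp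

end

context prob_space begin

lemma conv_shift:
  fixes X :: "nat \<Rightarrow> 'a \<Rightarrow> real"
  assumes m: "\<And>i. X i \<in> borel_measurable M"
    and c: "conv_in_prob M (\<lambda>n \<omega>. (\<Sum>i<n. X i \<omega> - a) / real n) 0"
  shows "conv_in_prob M (\<lambda>n \<omega>. (\<Sum>i<n. X i \<omega>) / real n) a"
proof -
  have "conv_in_prob M (\<lambda>n \<omega>. (\<Sum>i<n. X i \<omega> - a) / real n - (\<lambda>n \<omega>. -1::real) n \<omega> * (\<lambda>n \<omega>. a) n \<omega>) (0 - (-1) * a)"
    by (rule conv_sub_mult[OF _ _ _ c conv_det conv_det]) (use m in \<open>auto intro: tendsto_const\<close>)
  then have c2: "conv_in_prob M (\<lambda>n \<omega>. (\<Sum>i<n. X i \<omega> - a) / real n + a) a" by simp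
  show ?thesis
  proof (rule conv_ev_cong[OF c2])
    show "eventually (\<lambda>n. \<forall>\<omega>\<in>space M. (\<Sum>i<n. X i \<omega> - a) / real n + a = (\<Sum>i<n. X i \<omega>) / real n) sequentially"
      using eventually_gt_at_top[of 0] by eventually_elim (simp add: sum_subtractf diff_divide_distrib)
  qed
qed

lemma indep_var_from_set:
  assumes ind: "indep_set (sets (vimage_algebra (space M) F MF)) (sets (vimage_algebra (space M) G MG))"
    and F: "F \<in> space M \<rightarrow> space MF" and G: "G \<in> space M \<rightarrow> space MG"
    and f: "f \<in> borel_measurable MF" and g: "g \<in> borel_measurable MG"
    and rv1: "(\<lambda>\<omega>. f (F \<omega>)) \<in> borel_measurable M" and rv2: "(\<lambda>\<omega>. g (G \<omega>)) \<in> borel_measurable M"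
  shows "indep_var borel (\<lambda>\<omega>. f (F \<omega>) :: real) borel (\<lambda>\<omega>. (g (G \<omega>) :: real))"
proof -
  have sub1: "sigma_sets (space M) {(\<lambda>\<omega>. f (F \<omega>)) -` A \<inter> space M | A. A \<in> sets borel} \<subseteq> sets (vimage_algebra (space M) F MF)"
  proof -
    have "{(\<lambda>\<omega>. f (F \<omega>)) -` A \<inter> space M | A. A \<in> sets borel} \<subseteq> sets (vimage_algebra (space M) F MF)"
    proof safe
      fix A :: "real set" assume "A \<in> sets borel"
      then have "f -` A \<inter> space MF \<in> sets MF" using f by (rule measurable_sets[rotated])
      then have "F -` (f -` A \<inter> space MF) \<inter> space M \<in> sets (vimage_algebra (space M) F MF)" by (rule in_vimage_algebra)
      moreover have "F -` (f -` A \<inter> space MF) \<inter> space M = (\<lambda>\<omega>. f (F \<omega>)) -` A \<inter> space M" using F by auto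
      ultimately show "(\<lambda>\<omega>. f (F \<omega>)) -` A \<inter> space M \<in> sets (vimage_algebra (space M) F MF)" by simp
    qed
    from sets.sigma_sets_subset[OF this] show ?thesis by simp
  qed
  have sub2: "sigma_sets (space M) {(\<lambda>\<omega>. g (G \<omega>)) -` A \<inter> space M | A. A \<in> sets borel} \<subseteq> sets (vimage_algebra (space M) G MG)"
  proof -
    have "{(\<lambda>\<omega>. g (G \<omega>)) -` A \<inter> space M | A. A \<in> sets borel} \<subseteq> sets (vimage_algebra (space M) G MG)"
    proof safe
      fix A :: "real set" assume "A \<in> sets borel"
      then have "g -` A \<inter> space MG \<in> sets MG" using g by (rule measurable_sets[rotated])
      then have "G -` (g -` A \<inter> space MG) \<inter> space M \<in> sets (vimage_algebra (space M) G MG)" by (rule in_vimage_algebra)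
      moreover have "G -` (g -` A \<inter> space MG) \<inter> space M = (\<lambda>\<omega>. g (G \<omega>)) -` A \<inter> space M" using G by auto
      ultimately show "(\<lambda>\<omega>. g (G \<omega>)) -` A \<inter> space M \<in> sets (vimage_algebra (space M) G MG)" by simp
    qed
    from sets.sigma_sets_subset[OF this] show ?thesis by simp
  qed
  have "indep_sets (case_bool (sigma_sets (space M) {(\<lambda>\<omega>. f (F \<omega>)) -` A \<inter> space M | A. A \<in> sets borel})
      (sigma_sets (space M) {(\<lambda>\<omega>. g (G \<omega>)) -` A \<inter> space M | A. A \<in> sets borel})) UNIV"
    by (rule indep_sets_mono_sets[OF ind[unfolded indep_set_def]]) (use sub1 sub2 in \<open>auto split: bool.split\<close>)
  then show ?thesis unfolding indep_var_eq indep_set_def using rv1 rv2 by simp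
qed

end

lemma x2_le_x4: "(x::real)\<^sup>2 \<le> 1 + x ^ 4"
proof -
  have "0 \<le> (x\<^sup>2 - 1/2)\<^sup>2" by simp
  moreover have "(x\<^sup>2 - 1/2)\<^sup>2 = (x\<^sup>2)\<^sup>2 - x\<^sup>2 + 1/4" by (simp add: power2_eq_square algebra_simps)
  moreover have "x ^ 4 = (x\<^sup>2)\<^sup>2" by (simp flip: power_mult)
  ultimately show ?thesis by linarith
qed

theorem mainTheorem1:
  fixes M :: "'a measure"
    and Y D Z eps eta :: "nat \<Rightarrow> 'a \<Rightarrow> real"
    and beta0 beta1 pi0 pi1 :: real
    and lam :: "nat \<Rightarrow> real"
  assumes P: "prob_space M"
    and pi1: "pi1 \<noteq> 0"
    and Ymodel: "\<And>i \<omega>. Y i \<omega> = beta0 + beta1 * D i \<omega> + eps i \<omega>"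
    and Dmodel: "\<And>i \<omega>. D i \<omega> = pi0 + pi1 * Z i \<omega> + eta i \<omega>"
    and eps_meas: "\<And>i. eps i \<in> borel_measurable M"
    and eta_meas: "\<And>i. eta i \<in> borel_measurable M"
    and err_indep: "prob_space.indep_vars M (\<lambda>_. borel \<Otimes>\<^sub>M borel)
                      (\<lambda>i \<omega>. (eps i \<omega>, eta i \<omega>)) UNIV"
    and err_ident: "\<And>i. distr M (borel \<Otimes>\<^sub>M borel) (\<lambda>\<omega>. (eps i \<omega>, eta i \<omega>))
                        = distr M (borel \<Otimes>\<^sub>M borel) (\<lambda>\<omega>. (eps 0 \<omega>, eta 0 \<omega>))"
    and eps_mean: "prob_space.expectation M (eps 0) = 0"
    and eta_mean: "prob_space.expectation M (eta 0) = 0"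
    and eps_sq: "integrable M (\<lambda>\<omega>. (eps 0 \<omega>)\<^sup>2)"
    and eta_sq: "integrable M (\<lambda>\<omega>. (eta 0 \<omega>)\<^sup>2)"
    and lam_nonneg: "\<And>n. lam n \<ge> 0"
    and lam_o: "(\<lambda>n. lam n / real n) \<longlonglongrightarrow> 0"
    and instr:
      "(\<comment> \<open>Assumption A: deterministic instruments\<close>
        \<exists>z :: nat \<Rightarrow> real.
          (\<forall>i. \<forall>\<omega>\<in>space M. Z i \<omega> = z i) \<and>
          (\<lambda>n. (\<Sum>i<n. (z i)\<^sup>2) / real n) \<longlonglongrightarrow> 1 \<and>
          (\<lambda>n. (\<Sum>i<n. z i) / real n) \<longlonglongrightarrow> 0)
       \<or>
       (\<comment> \<open>Assumption B: stochastic i.i.d. instruments independent of the errors\<close>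
        (\<forall>i. Z i \<in> borel_measurable M) \<and>
        prob_space.indep_vars M (\<lambda>_. borel) Z UNIV \<and>
        (\<forall>i. distr M borel (Z i) = distr M borel (Z 0)) \<and>
        prob_space.indep_set M
          (sets (vimage_algebra (space M) (\<lambda>\<omega> i. Z i \<omega>) (Pi\<^sub>M UNIV (\<lambda>_. borel))))
          (sets (vimage_algebra (space M) (\<lambda>\<omega> i. (eps i \<omega>, eta i \<omega>))
                   (Pi\<^sub>M UNIV (\<lambda>_. borel \<Otimes>\<^sub>M borel)))) \<and>
        integrable M (\<lambda>\<omega>. (Z 0 \<omega>) ^ 4) \<and>
        prob_space.variance M (Z 0) = 1)"
  shows "conv_in_prob M (\<lambda>n \<omega>. ridge_iv (\<lambda>i. Y i \<omega>) (\<lambda>i. D i \<omega>) (\<lambda>i. Z i \<omega>) (lam n) n) beta1"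
proof -
  interpret prob_space M by (rule P)
  note epsm[measurable] = eps_meas
  note etam[measurable] = eta_meas
  have Zm[measurable]: "Z i \<in> borel_measurable M" for i
  proof (cases "\<exists>z :: nat \<Rightarrow> real. \<forall>i. \<forall>\<omega>\<in>space M. Z i \<omega> = z i")
    case True
    then obtain z :: "nat \<Rightarrow> real" where z: "\<forall>i. \<forall>\<omega>\<in>space M. Z i \<omega> = z i" by blast
    show ?thesis using measurable_cong[of M "Z i" "\<lambda>_. z i" borel] z by simp
  next
    case False
    then show ?thesis using instr by blast
  qed
  define mz where "mz n \<omega> = (\<Sum>i<n. Z i \<omega>) / real n" for n \<omega>
  define Q where "Q n \<omega> = (\<Sum>i<n. Z i \<omega> * (Z i \<omega> - mz n \<omega>)) / real n" for n \<omega>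
  define EE where "EE k n \<omega> = (\<Sum>i<n. k (eps i \<omega>, eta i \<omega>) * (Z i \<omega> - mz n \<omega>)) / real n"
    for k :: "real \<times> real \<Rightarrow> real" and n \<omega>
  have mzm[measurable]: "mz n \<in> borel_measurable M" for n unfolding mz_def by measurable
  have Qm: "Q n \<in> borel_measurable M" for n unfolding Q_def mz_def by measurable
  have EEm: "EE k n \<in> borel_measurable M" if [measurable]: "k \<in> borel_measurable (borel \<Otimes>\<^sub>M borel)" for k n
    unfolding EE_def mz_def by measurable
  have Qeq: "Q n \<omega> = (\<Sum>i<n. (Z i \<omega>)\<^sup>2) / real n - mz n \<omega> * mz n \<omega>" for n \<omega>
  proof -
    have "(\<Sum>i<n. Z i \<omega> * (Z i \<omega> - mz n \<omega>)) = (\<Sum>i<n. (Z i \<omega>)\<^sup>2) - mz n \<omega> * (\<Sum>i<n. Z i \<omega>)"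
      by (simp add: right_diff_distrib sum_subtractf sum_distrib_left power2_eq_square mult.commute)
    then show ?thesis unfolding Q_def by (simp add: diff_divide_distrib mz_def)
  qed
  have EEeq: "EE k n \<omega> = (\<Sum>i<n. k (eps i \<omega>, eta i \<omega>) * Z i \<omega>) / real n
      - (\<Sum>i<n. k (eps i \<omega>, eta i \<omega>)) / real n * mz n \<omega>" for k n \<omega>
  proof -
    have "(\<Sum>i<n. k (eps i \<omega>, eta i \<omega>) * (Z i \<omega> - mz n \<omega>))
        = (\<Sum>i<n. k (eps i \<omega>, eta i \<omega>) * Z i \<omega>) - (\<Sum>i<n. k (eps i \<omega>, eta i \<omega>)) * mz n \<omega>"
      by (simp add: right_diff_distrib sum_subtractf sum_distrib_right)
    then show ?thesis unfolding EE_def by (simp add: diff_divide_distrib)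
  qed
  have pairm[measurable]: "(\<lambda>\<omega>. (eps i \<omega>, eta i \<omega>)) \<in> measurable M (borel \<Otimes>\<^sub>M borel)" for i
    by measurable
  have fm: "fst \<in> borel_measurable (borel \<Otimes>\<^sub>M borel)" "snd \<in> borel_measurable (borel \<Otimes>\<^sub>M borel)"
    by measurable
  have tr: "integrable M (\<lambda>\<omega>. g (eps i \<omega>, eta i \<omega>)) \<longleftrightarrow> integrable M (\<lambda>\<omega>. g (eps 0 \<omega>, eta 0 \<omega>))"
       "expectation (\<lambda>\<omega>. g (eps i \<omega>, eta i \<omega>)) = expectation (\<lambda>\<omega>. g (eps 0 \<omega>, eta 0 \<omega>))"
    if g: "g \<in> borel_measurable (borel \<Otimes>\<^sub>M borel)" for g :: "real \<times> real \<Rightarrow> real" and i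
    using ident_transfer[OF err_ident[of i] pairm[of i] pairm[of 0] g] by auto
  have ufacts: "(\<forall>i. integrable M (\<lambda>\<omega>. (k (eps i \<omega>, eta i \<omega>))\<^sup>2)) \<and>
      (\<forall>i. integrable M (\<lambda>\<omega>. k (eps i \<omega>, eta i \<omega>))) \<and>
      (\<forall>i. expectation (\<lambda>\<omega>. (k (eps i \<omega>, eta i \<omega>))\<^sup>2) = expectation (\<lambda>\<omega>. (k (eps 0 \<omega>, eta 0 \<omega>))\<^sup>2)) \<and>
      (\<forall>i j. i \<noteq> j \<longrightarrow> expectation (\<lambda>\<omega>. k (eps i \<omega>, eta i \<omega>) * k (eps j \<omega>, eta j \<omega>)) = 0)"
    if k: "k = fst \<or> k = snd" for k
  proof -
    have km[measurable]: "k \<in> borel_measurable (borel \<Otimes>\<^sub>M borel)" using k fm by auto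
    have b1: "integrable M (\<lambda>\<omega>. (k (eps 0 \<omega>, eta 0 \<omega>))\<^sup>2)" using k eps_sq eta_sq by auto
    have b2: "expectation (\<lambda>\<omega>. k (eps 0 \<omega>, eta 0 \<omega>)) = 0" using k eps_mean eta_mean by auto
    have usq: "integrable M (\<lambda>\<omega>. (k (eps i \<omega>, eta i \<omega>))\<^sup>2)" for i
      using tr(1)[of "\<lambda>p. (k p)\<^sup>2" i] b1 by simp
    have uint: "integrable M (\<lambda>\<omega>. k (eps i \<omega>, eta i \<omega>))" for i
      by (rule square_integrable_imp_integrable[OF _ usq]) measurable
    have uE: "expectation (\<lambda>\<omega>. k (eps i \<omega>, eta i \<omega>)) = 0" for i
      using tr(2)[of k i] b2 by simp
    have uE2: "expectation (\<lambda>\<omega>. (k (eps i \<omega>, eta i \<omega>))\<^sup>2) = expectation (\<lambda>\<omega>. (k (eps 0 \<omega>, eta 0 \<omega>))\<^sup>2)" for i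
      using tr(2)[of "\<lambda>p. (k p)\<^sup>2" i] by simp
    have uind: "indep_vars (\<lambda>_. borel) (\<lambda>i \<omega>. k (eps i \<omega>, eta i \<omega>)) UNIV"
      using indep_vars_compose2[OF err_indep, of "\<lambda>_. k" "\<lambda>_. borel"] by simp
    have "i \<noteq> j \<Longrightarrow> expectation (\<lambda>\<omega>. k (eps i \<omega>, eta i \<omega>) * k (eps j \<omega>, eta j \<omega>)) = 0" for i j
      by (rule uncorr[OF uind _ uint uE])
    then show ?thesis using usq uint uE2 by blast
  qed
  define SQ where "SQ n \<omega> = (\<Sum>i<n. (Z i \<omega>)\<^sup>2) / real n" for n \<omega>
  define A where "A k n \<omega> = (\<Sum>i<n. k (eps i \<omega>, eta i \<omega>) * Z i \<omega>) / real n" for k :: "real \<times> real \<Rightarrow> real" and n \<omega>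
  define B where "B k n \<omega> = (\<Sum>i<n. k (eps i \<omega>, eta i \<omega>)) / real n" for k :: "real \<times> real \<Rightarrow> real" and n \<omega>
  have SQm: "SQ n \<in> borel_measurable M" for n unfolding SQ_def by measurable
  have Am: "A k n \<in> borel_measurable M" if [measurable]: "k \<in> borel_measurable (borel \<Otimes>\<^sub>M borel)" for k n
    unfolding A_def by measurable
  have Bm: "B k n \<in> borel_measurable M" if [measurable]: "k \<in> borel_measurable (borel \<Otimes>\<^sub>M borel)" for k n
    unfolding B_def by measurable
  have Bc: "conv_in_prob M (B k) 0" if k: "k = fst \<or> k = snd" for k
  proof -
    have km[measurable]: "k \<in> borel_measurable (borel \<Otimes>\<^sub>M borel)" using k fm by auto
    show ?thesis unfolding B_def
      by (rule wlln_const) (use ufacts[OF k] in auto)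
  qed
  have main: "\<exists>\<mu> m2. conv_in_prob M mz \<mu> \<and> conv_in_prob M SQ m2 \<and> m2 - \<mu> * \<mu> = 1 \<and>
      (\<forall>k. k = fst \<or> k = snd \<longrightarrow> conv_in_prob M (A k) 0)"
    using instr
  proof (elim disjE)
    assume "\<exists>z :: nat \<Rightarrow> real.
          (\<forall>i. \<forall>\<omega>\<in>space M. Z i \<omega> = z i) \<and>
          (\<lambda>n. (\<Sum>i<n. (z i)\<^sup>2) / real n) \<longlonglongrightarrow> 1 \<and>
          (\<lambda>n. (\<Sum>i<n. z i) / real n) \<longlonglongrightarrow> 0"
    then obtain z :: "nat \<Rightarrow> real" where zs: "\<forall>i. \<forall>\<omega>\<in>space M. Z i \<omega> = z i"
      and z2: "(\<lambda>n. (\<Sum>i<n. (z i)\<^sup>2) / real n) \<longlonglongrightarrow> 1" and z1: "(\<lambda>n. (\<Sum>i<n. z i) / real n) \<longlonglongrightarrow> 0"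
      by blast
    have mzc: "conv_in_prob M mz 0"
    proof (rule conv_ev_cong[OF conv_det[OF z1]])
      show "eventually (\<lambda>n. \<forall>\<omega>\<in>space M. (\<Sum>i<n. z i) / real n = mz n \<omega>) sequentially"
        using zs by (simp add: mz_def)
    qed
    have SQc: "conv_in_prob M SQ 1"
    proof (rule conv_ev_cong[OF conv_det[OF z2]])
      show "eventually (\<lambda>n. \<forall>\<omega>\<in>space M. (\<Sum>i<n. (z i)\<^sup>2) / real n = SQ n \<omega>) sequentially"
        using zs by (simp add: SQ_def)
    qed
    have Ak: "conv_in_prob M (A k) 0" if k: "k = fst \<or> k = snd" for k
    proof -
      have km[measurable]: "k \<in> borel_measurable (borel \<Otimes>\<^sub>M borel)" using k fm by auto
      have usq: "\<And>i. integrable M (\<lambda>\<omega>. (k (eps i \<omega>, eta i \<omega>))\<^sup>2)"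
        and uE2: "\<And>i. expectation (\<lambda>\<omega>. (k (eps i \<omega>, eta i \<omega>))\<^sup>2) = expectation (\<lambda>\<omega>. (k (eps 0 \<omega>, eta 0 \<omega>))\<^sup>2)"
        and uorth: "\<And>i j. i \<noteq> j \<Longrightarrow> expectation (\<lambda>\<omega>. k (eps i \<omega>, eta i \<omega>) * k (eps j \<omega>, eta j \<omega>)) = 0"
        using ufacts[OF k] by auto
      define s where "s = expectation (\<lambda>\<omega>. (k (eps 0 \<omega>, eta 0 \<omega>))\<^sup>2)"
      have c: "conv_in_prob M (\<lambda>n \<omega>. (\<Sum>i<n. k (eps i \<omega>, eta i \<omega>) * z i) / real n) 0"
      proof (rule wlln_L2)
        show "\<And>i. (\<lambda>\<omega>. k (eps i \<omega>, eta i \<omega>) * z i) \<in> borel_measurable M" by measurable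
        show "\<And>i. integrable M (\<lambda>\<omega>. (k (eps i \<omega>, eta i \<omega>) * z i)\<^sup>2)"
          using usq by (simp add: power_mult_distrib)
        show "expectation (\<lambda>\<omega>. k (eps i \<omega>, eta i \<omega>) * z i * (k (eps j \<omega>, eta j \<omega>) * z j)) = 0"
          if ij: "i \<noteq> j" for i j
        proof -
          have "(\<lambda>\<omega>. k (eps i \<omega>, eta i \<omega>) * z i * (k (eps j \<omega>, eta j \<omega>) * z j))
              = (\<lambda>\<omega>. (z i * z j) * (k (eps i \<omega>, eta i \<omega>) * k (eps j \<omega>, eta j \<omega>)))"
            by (rule ext) (simp add: algebra_simps)
          then show ?thesis using uorth[OF ij] by simp
        qed
        have eq: "(\<Sum>i<n. expectation (\<lambda>\<omega>. (k (eps i \<omega>, eta i \<omega>) * z i)\<^sup>2)) / (real n)\<^sup>2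
            = s * ((\<Sum>i<n. (z i)\<^sup>2) / real n) * (1 / real n)" for n
        proof -
          have e1: "expectation (\<lambda>\<omega>. (k (eps i \<omega>, eta i \<omega>) * z i)\<^sup>2) = (z i)\<^sup>2 * s" for i
          proof -
            have "(\<lambda>\<omega>. (k (eps i \<omega>, eta i \<omega>) * z i)\<^sup>2) = (\<lambda>\<omega>. (z i)\<^sup>2 * (k (eps i \<omega>, eta i \<omega>))\<^sup>2)"
              by (rule ext) (simp add: power_mult_distrib)
            then show ?thesis by (simp only: integral_mult_right_zero uE2[of i] s_def)
          qed
          have "(\<Sum>i<n. expectation (\<lambda>\<omega>. (k (eps i \<omega>, eta i \<omega>) * z i)\<^sup>2)) = (\<Sum>i<n. (z i)\<^sup>2) * s"
            unfolding e1 by (rule sum_distrib_right[symmetric])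
          then show ?thesis by (simp add: power2_eq_square mult.commute)
        qed
        have "(\<lambda>n. s * ((\<Sum>i<n. (z i)\<^sup>2) / real n) * (1 / real n)) \<longlonglongrightarrow> s * 1 * 0"
          by (intro tendsto_mult tendsto_const z2 lim_const_over_n)
        then show "(\<lambda>n. (\<Sum>i<n. expectation (\<lambda>\<omega>. (k (eps i \<omega>, eta i \<omega>) * z i)\<^sup>2)) / (real n)\<^sup>2) \<longlonglongrightarrow> 0"
          unfolding eq by simp
      qed
      then show ?thesis
      proof (rule conv_ev_cong)
        show "eventually (\<lambda>n. \<forall>\<omega>\<in>space M. (\<Sum>i<n. k (eps i \<omega>, eta i \<omega>) * z i) / real n = A k n \<omega>) sequentially"
          using zs by (simp add: A_def)
      qed
    qed
    show ?thesis using mzc SQc Ak by (intro exI[of _ 0] exI[of _ 1]) auto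
  next
    assume "(\<forall>i. Z i \<in> borel_measurable M) \<and>
        prob_space.indep_vars M (\<lambda>_. borel) Z UNIV \<and>
        (\<forall>i. distr M borel (Z i) = distr M borel (Z 0)) \<and>
        prob_space.indep_set M
          (sets (vimage_algebra (space M) (\<lambda>\<omega> i. Z i \<omega>) (Pi\<^sub>M UNIV (\<lambda>_. borel))))
          (sets (vimage_algebra (space M) (\<lambda>\<omega> i. (eps i \<omega>, eta i \<omega>))
                   (Pi\<^sub>M UNIV (\<lambda>_. borel \<Otimes>\<^sub>M borel)))) \<and>
        integrable M (\<lambda>\<omega>. (Z 0 \<omega>) ^ 4) \<and>
        prob_space.variance M (Z 0) = 1"
    then have Zind: "indep_vars (\<lambda>_. borel) Z UNIV"
      and Zid: "\<And>i. distr M borel (Z i) = distr M borel (Z 0)"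
      and Zcross: "indep_set
          (sets (vimage_algebra (space M) (\<lambda>\<omega> i. Z i \<omega>) (Pi\<^sub>M UNIV (\<lambda>_. borel))))
          (sets (vimage_algebra (space M) (\<lambda>\<omega> i. (eps i \<omega>, eta i \<omega>))
                   (Pi\<^sub>M UNIV (\<lambda>_. borel \<Otimes>\<^sub>M borel))))"
      and Z4: "integrable M (\<lambda>\<omega>. (Z 0 \<omega>) ^ 4)"
      and Zvar: "variance (Z 0) = 1"
      by auto
    have tZ: "integrable M (\<lambda>\<omega>. g (Z i \<omega>)) \<longleftrightarrow> integrable M (\<lambda>\<omega>. g (Z 0 \<omega>))"
         "expectation (\<lambda>\<omega>. g (Z i \<omega>)) = expectation (\<lambda>\<omega>. g (Z 0 \<omega>))"
      if g: "g \<in> borel_measurable borel" for g :: "real \<Rightarrow> real" and i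
      using ident_transfer[OF Zid[of i] Zm[of i] Zm[of 0] g] by auto
    have Z2_0: "integrable M (\<lambda>\<omega>. (Z 0 \<omega>)\<^sup>2)"
    proof (rule Bochner_Integration.integrable_bound[of _ "\<lambda>\<omega>. 1 + (Z 0 \<omega>) ^ 4"])
      show "integrable M (\<lambda>\<omega>. 1 + (Z 0 \<omega>) ^ 4)" using Z4 by simp
      show "(\<lambda>\<omega>. (Z 0 \<omega>)\<^sup>2) \<in> borel_measurable M" by measurable
      have "norm (x\<^sup>2) \<le> norm (1 + x ^ 4)" for x :: real
      proof -
        have "0 \<le> x ^ 4" by (simp add: zero_le_even_power)
        then show ?thesis using x2_le_x4[of x] by simp
      qed
      then show "AE \<omega> in M. norm ((Z 0 \<omega>)\<^sup>2) \<le> norm (1 + (Z 0 \<omega>) ^ 4)" by simp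
    qed
    have Z2: "integrable M (\<lambda>\<omega>. (Z i \<omega>)\<^sup>2)" for i using tZ(1)[of "\<lambda>x. x\<^sup>2" i] Z2_0 by simp
    have Zint: "integrable M (Z i)" for i by (rule square_integrable_imp_integrable[OF Zm Z2])
    have Z4i: "integrable M (\<lambda>\<omega>. (Z i \<omega>) ^ 4)" for i using tZ(1)[of "\<lambda>x. x ^ 4" i] Z4 by simp
    define \<mu> where "\<mu> = expectation (Z 0)"
    define m2 where "m2 = expectation (\<lambda>\<omega>. (Z 0 \<omega>)\<^sup>2)"
    have EZ: "expectation (Z i) = \<mu>" for i using tZ(2)[of "\<lambda>x. x" i] \<mu>_def by simp
    have EZ2: "expectation (\<lambda>\<omega>. (Z i \<omega>)\<^sup>2) = m2" for i using tZ(2)[of "\<lambda>x. x\<^sup>2" i] m2_def by simp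
    have var: "m2 - \<mu> * \<mu> = 1"
      using Zvar variance_eq[OF Zint[of 0] Z2_0] \<mu>_def m2_def by (simp add: power2_eq_square)
    have mzeq: "mz = (\<lambda>n \<omega>. (\<Sum>i<n. Z i \<omega>) / real n)" by (intro ext) (simp add: mz_def)
    have mzc: "conv_in_prob M mz \<mu>"
    proof -
      have Zc_ind: "indep_vars (\<lambda>_. borel) (\<lambda>i \<omega>. Z i \<omega> - \<mu>) UNIV"
        using indep_vars_compose2[OF Zind, of "\<lambda>_ x. x - \<mu>" "\<lambda>_. borel"] by simp
      have Zc_E: "expectation (\<lambda>\<omega>. Z i \<omega> - \<mu>) = 0" for i
        using EZ[of i] Zint[of i] by (simp add: prob_space)
      have "conv_in_prob M (\<lambda>n \<omega>. (\<Sum>i<n. Z i \<omega> - \<mu>) / real n) 0"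
      proof (rule wlln_const)
        show "\<And>i. (\<lambda>\<omega>. Z i \<omega> - \<mu>) \<in> borel_measurable M" by measurable
        show "integrable M (\<lambda>\<omega>. (Z i \<omega> - \<mu>)\<^sup>2)" for i
        proof -
          have "(\<lambda>\<omega>. (Z i \<omega> - \<mu>)\<^sup>2) = (\<lambda>\<omega>. (Z i \<omega>)\<^sup>2 + \<mu>\<^sup>2 - 2 * Z i \<omega> * \<mu>)"
            by (rule ext) (rule power2_diff)
          then show ?thesis using Z2[of i] Zint[of i] by simp
        qed
        show "i \<noteq> j \<Longrightarrow> expectation (\<lambda>\<omega>. (Z i \<omega> - \<mu>) * (Z j \<omega> - \<mu>)) = 0" for i j
          by (rule uncorr[OF Zc_ind _ _ Zc_E]) (use Zint in auto)
        show "expectation (\<lambda>\<omega>. (Z i \<omega> - \<mu>)\<^sup>2) = expectation (\<lambda>\<omega>. (Z 0 \<omega> - \<mu>)\<^sup>2)" for i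
          using tZ(2)[of "\<lambda>x. (x - \<mu>)\<^sup>2" i] by simp
      qed
      from conv_shift[OF Zm this] show ?thesis unfolding mzeq .
    qed
    have SQeq: "SQ = (\<lambda>n \<omega>. (\<Sum>i<n. (Z i \<omega>)\<^sup>2) / real n)" by (intro ext) (simp add: SQ_def)
    have SQc: "conv_in_prob M SQ m2"
    proof -
      have Zc_ind: "indep_vars (\<lambda>_. borel) (\<lambda>i \<omega>. (Z i \<omega>)\<^sup>2 - m2) UNIV"
        using indep_vars_compose2[OF Zind, of "\<lambda>_ x. x\<^sup>2 - m2" "\<lambda>_. borel"] by simp
      have Zc_E: "expectation (\<lambda>\<omega>. (Z i \<omega>)\<^sup>2 - m2) = 0" for i
        using EZ2[of i] Z2[of i] by (simp add: prob_space)
      have "conv_in_prob M (\<lambda>n \<omega>. (\<Sum>i<n. (Z i \<omega>)\<^sup>2 - m2) / real n) 0"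
      proof (rule wlln_const)
        show "\<And>i. (\<lambda>\<omega>. (Z i \<omega>)\<^sup>2 - m2) \<in> borel_measurable M" by measurable
        show "integrable M (\<lambda>\<omega>. ((Z i \<omega>)\<^sup>2 - m2)\<^sup>2)" for i
        proof -
          have p4: "((Z i \<omega>)\<^sup>2)\<^sup>2 = (Z i \<omega>) ^ 4" for \<omega> by (simp flip: power_mult)
          have "(\<lambda>\<omega>. ((Z i \<omega>)\<^sup>2 - m2)\<^sup>2) = (\<lambda>\<omega>. (Z i \<omega>) ^ 4 + m2\<^sup>2 - 2 * (Z i \<omega>)\<^sup>2 * m2)"
            by (rule ext) (simp only: power2_diff p4)
          then show ?thesis using Z2[of i] Z4i[of i] by simp
        qed
        show "i \<noteq> j \<Longrightarrow> expectation (\<lambda>\<omega>. ((Z i \<omega>)\<^sup>2 - m2) * ((Z j \<omega>)\<^sup>2 - m2)) = 0" for i j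
          by (rule uncorr[OF Zc_ind _ _ Zc_E]) (use Z2 in auto)
        show "expectation (\<lambda>\<omega>. ((Z i \<omega>)\<^sup>2 - m2)\<^sup>2) = expectation (\<lambda>\<omega>. ((Z 0 \<omega>)\<^sup>2 - m2)\<^sup>2)" for i
          using tZ(2)[of "\<lambda>x. (x\<^sup>2 - m2)\<^sup>2" i] by simp
      qed
      from conv_shift[OF _ this] show ?thesis unfolding SQeq by simp
    qed
    have Fm: "(\<lambda>\<omega> i. Z i \<omega>) \<in> measurable M (Pi\<^sub>M UNIV (\<lambda>_. borel))"
      by (rule measurable_PiM_single') auto
    have Gm: "(\<lambda>\<omega> i. (eps i \<omega>, eta i \<omega>)) \<in> measurable M (Pi\<^sub>M UNIV (\<lambda>_. borel \<Otimes>\<^sub>M borel))"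
      by (rule measurable_PiM_single') (auto simp: space_pair_measure)
    have cross: "indep_var borel (\<lambda>\<omega>. f (\<lambda>i. Z i \<omega>)) borel (\<lambda>\<omega>. g (\<lambda>i. (eps i \<omega>, eta i \<omega>)))"
      if f: "f \<in> borel_measurable (Pi\<^sub>M UNIV (\<lambda>_. borel))"
        and g: "g \<in> borel_measurable (Pi\<^sub>M UNIV (\<lambda>_. borel \<Otimes>\<^sub>M borel))"
      for f :: "(nat \<Rightarrow> real) \<Rightarrow> real" and g :: "(nat \<Rightarrow> real \<times> real) \<Rightarrow> real"
    proof (rule indep_var_from_set[OF Zcross _ _ f g])
      show "(\<lambda>\<omega> i. Z i \<omega>) \<in> space M \<rightarrow> space (Pi\<^sub>M UNIV (\<lambda>_. borel))"
        using measurable_space[OF Fm] by blast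
      show "(\<lambda>\<omega> i. (eps i \<omega>, eta i \<omega>)) \<in> space M \<rightarrow> space (Pi\<^sub>M UNIV (\<lambda>_. borel \<Otimes>\<^sub>M borel))"
        using measurable_space[OF Gm] by blast
      show "(\<lambda>\<omega>. f (\<lambda>i. Z i \<omega>)) \<in> borel_measurable M"
        using measurable_comp[OF Fm f] by (simp add: comp_def)
      show "(\<lambda>\<omega>. g (\<lambda>i. (eps i \<omega>, eta i \<omega>))) \<in> borel_measurable M"
        using measurable_comp[OF Gm g] by (simp add: comp_def)
    qed
    have Ak: "conv_in_prob M (A k) 0" if k: "k = fst \<or> k = snd" for k
    proof -
      have km[measurable]: "k \<in> borel_measurable (borel \<Otimes>\<^sub>M borel)" using k fm by auto
      have usq: "\<And>i. integrable M (\<lambda>\<omega>. (k (eps i \<omega>, eta i \<omega>))\<^sup>2)"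
        and uint: "\<And>i. integrable M (\<lambda>\<omega>. k (eps i \<omega>, eta i \<omega>))"
        and uE2: "\<And>i. expectation (\<lambda>\<omega>. (k (eps i \<omega>, eta i \<omega>))\<^sup>2) = expectation (\<lambda>\<omega>. (k (eps 0 \<omega>, eta 0 \<omega>))\<^sup>2)"
        and uorth: "\<And>i j. i \<noteq> j \<Longrightarrow> expectation (\<lambda>\<omega>. k (eps i \<omega>, eta i \<omega>) * k (eps j \<omega>, eta j \<omega>)) = 0"
        using ufacts[OF k] by auto
      define s where "s = expectation (\<lambda>\<omega>. (k (eps 0 \<omega>, eta 0 \<omega>))\<^sup>2)"
      have cr1: "indep_var borel (\<lambda>\<omega>. (Z i \<omega>)\<^sup>2) borel (\<lambda>\<omega>. (k (eps i \<omega>, eta i \<omega>))\<^sup>2)" for i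
      proof -
        have f1: "(\<lambda>v. (v i)\<^sup>2) \<in> borel_measurable (Pi\<^sub>M UNIV (\<lambda>_. borel :: real measure))" by measurable
        have g1: "(\<lambda>v. (k (v i))\<^sup>2) \<in> borel_measurable (Pi\<^sub>M UNIV (\<lambda>_. borel \<Otimes>\<^sub>M borel :: (real \<times> real) measure))" by measurable
        show ?thesis using cross[OF f1 g1] by simp
      qed
      have cr2: "indep_var borel (\<lambda>\<omega>. Z i \<omega> * Z j \<omega>) borel (\<lambda>\<omega>. k (eps i \<omega>, eta i \<omega>) * k (eps j \<omega>, eta j \<omega>))" for i j
      proof -
        have f1: "(\<lambda>v. v i * v j) \<in> borel_measurable (Pi\<^sub>M UNIV (\<lambda>_. borel :: real measure))" by measurable
        have g1: "(\<lambda>v. k (v i) * k (v j)) \<in> borel_measurable (Pi\<^sub>M UNIV (\<lambda>_. borel \<Otimes>\<^sub>M borel :: (real \<times> real) measure))" by measurable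
        show ?thesis using cross[OF f1 g1] by simp
      qed
      have sqeq: "(\<lambda>\<omega>. (k (eps i \<omega>, eta i \<omega>) * Z i \<omega>)\<^sup>2) = (\<lambda>\<omega>. (Z i \<omega>)\<^sup>2 * (k (eps i \<omega>, eta i \<omega>))\<^sup>2)" for i
        by (rule ext) (simp add: power_mult_distrib)
      have "conv_in_prob M (\<lambda>n \<omega>. (\<Sum>i<n. k (eps i \<omega>, eta i \<omega>) * Z i \<omega>) / real n) 0"
      proof (rule wlln_const)
        show "\<And>i. (\<lambda>\<omega>. k (eps i \<omega>, eta i \<omega>) * Z i \<omega>) \<in> borel_measurable M" by measurable
        show "integrable M (\<lambda>\<omega>. (k (eps i \<omega>, eta i \<omega>) * Z i \<omega>)\<^sup>2)" for i
          unfolding sqeq by (rule indep_var_integrable[OF cr1 Z2 usq])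
        show "expectation (\<lambda>\<omega>. (k (eps i \<omega>, eta i \<omega>) * Z i \<omega>)\<^sup>2) = m2 * s" for i
        proof -
          have "expectation (\<lambda>\<omega>. (k (eps i \<omega>, eta i \<omega>))\<^sup>2) = s" using uE2[of i] s_def by simp
          then show ?thesis unfolding sqeq indep_var_lebesgue_integral[OF cr1 Z2 usq] EZ2 by simp
        qed
        show "expectation (\<lambda>\<omega>. k (eps i \<omega>, eta i \<omega>) * Z i \<omega> * (k (eps j \<omega>, eta j \<omega>) * Z j \<omega>)) = 0"
          if ij: "i \<noteq> j" for i j
        proof -
          have i1: "integrable M (\<lambda>\<omega>. Z i \<omega> * Z j \<omega>)" by (rule int_prod_sq[OF Zm Zm Z2 Z2])
          have i2: "integrable M (\<lambda>\<omega>. k (eps i \<omega>, eta i \<omega>) * k (eps j \<omega>, eta j \<omega>))"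
            by (rule int_prod_sq[OF _ _ usq usq]) measurable
          have "(\<lambda>\<omega>. k (eps i \<omega>, eta i \<omega>) * Z i \<omega> * (k (eps j \<omega>, eta j \<omega>) * Z j \<omega>))
              = (\<lambda>\<omega>. (Z i \<omega> * Z j \<omega>) * (k (eps i \<omega>, eta i \<omega>) * k (eps j \<omega>, eta j \<omega>)))"
            by (rule ext) (simp add: algebra_simps)
          then show ?thesis
            using uorth[OF ij] by (simp add: indep_var_lebesgue_integral[OF cr2 i1 i2])
        qed
      qed
      then show ?thesis unfolding A_def by (simp add: fun_eq_iff)
    qed
    show ?thesis using mzc SQc var Ak by blast
  qed
  then obtain \<mu> m2 where mzc: "conv_in_prob M mz \<mu>" and SQc: "conv_in_prob M SQ m2" and var: "m2 - \<mu> * \<mu> = 1"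
    and Ac: "\<And>k. k = fst \<or> k = snd \<Longrightarrow> conv_in_prob M (A k) 0"
    by blast
  have Qc: "conv_in_prob M Q 1"
  proof (rule conv_ev_cong)
    show "conv_in_prob M (\<lambda>n \<omega>. SQ n \<omega> - mz n \<omega> * mz n \<omega>) 1"
      using conv_sub_mult[OF SQm mzm mzm SQc mzc mzc] var by simp
    show "eventually (\<lambda>n. \<forall>\<omega>\<in>space M. SQ n \<omega> - mz n \<omega> * mz n \<omega> = Q n \<omega>) sequentially"
      by (simp add: Qeq SQ_def)
  qed
  have kc: "conv_in_prob M (EE k) 0" if k: "k = fst \<or> k = snd" for k
  proof (rule conv_ev_cong)
    have km[measurable]: "k \<in> borel_measurable (borel \<Otimes>\<^sub>M borel)" using k fm by auto
    show "conv_in_prob M (\<lambda>n \<omega>. A k n \<omega> - B k n \<omega> * mz n \<omega>) 0"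
      using conv_sub_mult[OF Am[OF km] Bm[OF km] mzm Ac[OF k] Bc[OF k] mzc] by simp
    show "eventually (\<lambda>n. \<forall>\<omega>\<in>space M. A k n \<omega> - B k n \<omega> * mz n \<omega> = EE k n \<omega>) sequentially"
      by (simp add: EEeq A_def B_def)
  qed
  have ridge_eq: "ridge_iv (\<lambda>i. Y i \<omega>) (\<lambda>i. D i \<omega>) (\<lambda>i. Z i \<omega>) (lam n) n
      = (beta1 * (pi1 * Q n \<omega> + EE snd n \<omega>) + EE fst n \<omega>) / ((pi1 * Q n \<omega> + EE snd n \<omega>) + lam n / real n)"
    if n: "n > 0" for n \<omega>
    using ridge_identity[OF n, of "\<lambda>i. Y i \<omega>" beta0 beta1 "\<lambda>i. D i \<omega>" "\<lambda>i. eps i \<omega>" pi0 pi1 "\<lambda>i. Z i \<omega>" "\<lambda>i. eta i \<omega>" "lam n"]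
      Ymodel Dmodel
    unfolding Q_def EE_def mz_def sample_mean_def by simp
  show ?thesis
  proof (rule conv3[OF Qm EEm[OF fm(1)] EEm[OF fm(2)] Qc kc kc])
    fix e :: real assume e: "e > 0"
    obtain d where d: "d > 0" and H: "\<And>Q E H L. \<bar>Q - 1\<bar> < d \<Longrightarrow> \<bar>E\<bar> < d \<Longrightarrow> \<bar>H\<bar> < d \<Longrightarrow> 0 \<le> L \<Longrightarrow> L < d \<Longrightarrow>
      \<bar>(beta1 * (pi1 * Q + H) + E) / ((pi1 * Q + H) + L) - beta1\<bar> \<le> e"
      using ratio_bound[OF pi1 e, of beta1] by blast
    have ev1: "eventually (\<lambda>n. \<bar>lam n / real n - 0\<bar> < d) sequentially"
      using lam_o d by (simp only: tendsto_iff dist_real_def)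
    have "eventually (\<lambda>n. \<forall>\<omega>\<in>space M. \<bar>Q n \<omega> - 1\<bar> < d \<longrightarrow> \<bar>EE fst n \<omega> - 0\<bar> < d \<longrightarrow> \<bar>EE snd n \<omega> - 0\<bar> < d \<longrightarrow>
        \<bar>ridge_iv (\<lambda>i. Y i \<omega>) (\<lambda>i. D i \<omega>) (\<lambda>i. Z i \<omega>) (lam n) n - beta1\<bar> \<le> e) sequentially"
      using ev1 eventually_gt_at_top[of 0]
    proof eventually_elim
      case (elim n)
      show ?case
      proof (intro ballI impI)
        fix \<omega> assume h: "\<bar>Q n \<omega> - 1\<bar> < d" "\<bar>EE fst n \<omega> - 0\<bar> < d" "\<bar>EE snd n \<omega> - 0\<bar> < d"
        have L0: "0 \<le> lam n / real n" using lam_nonneg[of n] by simp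
        show "\<bar>ridge_iv (\<lambda>i. Y i \<omega>) (\<lambda>i. D i \<omega>) (\<lambda>i. Z i \<omega>) (lam n) n - beta1\<bar> \<le> e"
          unfolding ridge_eq[OF elim(2)] using H[of "Q n \<omega>" "EE fst n \<omega>" "EE snd n \<omega>" "lam n / real n"] h L0 elim(1)
          by (simp add: abs_of_nonneg[OF lam_nonneg[of n]])
      qed
    qed
    then show "\<exists>d>0. eventually (\<lambda>n. \<forall>\<omega>\<in>space M. \<bar>Q n \<omega> - 1\<bar> < d \<longrightarrow> \<bar>EE fst n \<omega> - 0\<bar> < d \<longrightarrow> \<bar>EE snd n \<omega> - 0\<bar> < d \<longrightarrow>
        \<bar>ridge_iv (\<lambda>i. Y i \<omega>) (\<lambda>i. D i \<omega>) (\<lambda>i. Z i \<omega>) (lam n) n - beta1\<bar> \<le> e) sequentially"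
      using d by blast
  qed auto
qed

end
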